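(* Let $\mathbf v\in\mathbb R_{>0}^m$. If $(\mathcal V,\mathcal W)\in\mathcal{DRS}_{\mathbf v}$ is a local $d_P$-minimizer of the joint potential $\mathrm{FP}$ on $\mathcal{DRS}_{\mathbf v}$, then $\mathcal W=\mathcal V^\#$.
   Context: Fix integers $m,d\ge1$ and $\mathbf k=(k_1,\dots,k_m)\in\mathbb N^m$ with each $k_i\le d$. A system is an $m$-tuple $\mathcal V=(V_i)_{i=1}^m$ with $V_i\in L(\mathbb C^d,\mathbb C^{k_i})$. Its analysis operator is $T_{\mathcal V}x=(V_1x,\dots,V_mx)$ and its RS operator is $S_{\mathcal V}=T_{\mathcal V}^*T_{\mathcal V}=\sum_iV_i^*V_i$; $\mathcal V$ is a reconstruction system (RS) if $S_{\mathcal V}$ is invertible, and $\mathcal{RS}(m,\mathbf k,d)$ is the set of RS's. Given weights $\mathbf v\in\mathbb R_{>0}^m$, $\mathcal P_{\mathbf v}(m,\mathbf k,d)$ is the set of RS's with $V_iV_i^*=v_i^2I_{k_i}$ for all $i$. The canonical dual is $\mathcal V^\#=(V_iS_{\mathcal V}^{-1})_i$; $\mathcal W\in\mathcal{RS}$ is a dual of $\mathcal V$ if $\sum_iW_i^*V_i=I_d$, and $\mathcal D(\mathcal V)$ is the set of duals. $\mathcal{DRS}_{\mathbf v}=\{(\mathcal V,\mathcal W)\in\mathcal P_{\mathbf v}\times\mathcal{RS}(m,\mathbf k,d):\mathcal W\in\mathcal D(\mathcal V)\}$, with joint potential $\mathrm{FP}(\mathcal V,\mathcal W)=\operatorname{tr}S_{\mathcal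 V}^2+\operatorname{tr}S_{\mathcal W}^2$. The metric $d_P(\mathcal V,\mathcal W)=(\sum_i\|V_i-W_i\|_2^2)^{1/2}$ uses the Frobenius norm. A pair $(\mathcal V,\mathcal W)\in\mathcal{DRS}_{\mathbf v}$ is a local $d_P$-minimizer of FP if there is $\varepsilon>0$ such that $\mathrm{FP}(\mathcal V',\mathcal W')\ge\mathrm{FP}(\mathcal V,\mathcal W)$ for all $(\mathcal V',\mathcal W')\in\mathcal{DRS}_{\mathbf v}$ with $d_P(\mathcal V,\mathcal V')+d_P(\mathcal W,\mathcal W')<\varepsilon$. *)

theory Defs
  imports "Jordan_Normal_Form.Schur_Decomposition" "Jordan_Normal_Form.Gauss_Jordan_Elimination"
begin

(* A system V = (V_i)_{i<m} is modelled as  V :: nat => complex mat  with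
   V i \<in> carrier_mat (k i) d for i < m  (i.e. V_i : C^d -> C^{k_i}).
   Indices are 0-based: i ranges over {0..<m}. *)

definition is_system :: "nat \<Rightarrow> (nat \<Rightarrow> nat) \<Rightarrow> nat \<Rightarrow> (nat \<Rightarrow> complex mat) \<Rightarrow> bool" where
  "is_system m k d V \<longleftrightarrow> (\<forall>i<m. V i \<in> carrier_mat (k i) d)"

definition rs_op :: "nat \<Rightarrow> nat \<Rightarrow> (nat \<Rightarrow> complex mat) \<Rightarrow> complex mat" where
  "rs_op m d V = mat d d (\<lambda>(a, b). \<Sum>i<m. (mat_adjoint (V i) * V i) $$ (a, b))"

definition is_RS :: "nat \<Rightarrow> (nat \<Rightarrow> nat) \<Rightarrow> nat \<Rightarrow> (nat \<Rightarrow> complex mat) \<Rightarrow> bool" where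
  "is_RS m k d V \<longleftrightarrow> is_system m k d V \<and> invertible_mat (rs_op m d V)"

definition is_Pv :: "nat \<Rightarrow> (nat \<Rightarrow> nat) \<Rightarrow> nat \<Rightarrow> (nat \<Rightarrow> real) \<Rightarrow> (nat \<Rightarrow> complex mat) \<Rightarrow> bool" where
  "is_Pv m k d v V \<longleftrightarrow> is_RS m k d V \<and>
     (\<forall>i<m. V i * mat_adjoint (V i) = complex_of_real ((v i)\<^sup>2) \<cdot>\<^sub>m 1\<^sub>m (k i))"

definition rs_inv :: "nat \<Rightarrow> nat \<Rightarrow> (nat \<Rightarrow> complex mat) \<Rightarrow> complex mat" where
  "rs_inv m d V = the (mat_inverse (rs_op m d V))"

definition canonical_dual :: "nat \<Rightarrow> nat \<Rightarrow> (nat \<Rightarrow> complex mat) \<Rightarrow> nat \<Rightarrow> complex mat" where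
  "canonical_dual m d V = (\<lambda>i. V i * rs_inv m d V)"

definition is_dual :: "nat \<Rightarrow> (nat \<Rightarrow> nat) \<Rightarrow> nat \<Rightarrow> (nat \<Rightarrow> complex mat) \<Rightarrow> (nat \<Rightarrow> complex mat) \<Rightarrow> bool" where
  "is_dual m k d V W \<longleftrightarrow> is_RS m k d W \<and>
     mat d d (\<lambda>(a, b). \<Sum>i<m. (mat_adjoint (W i) * V i) $$ (a, b)) = 1\<^sub>m d"

definition is_DRS :: "nat \<Rightarrow> (nat \<Rightarrow> nat) \<Rightarrow> nat \<Rightarrow> (nat \<Rightarrow> real) \<Rightarrow> (nat \<Rightarrow> complex mat) \<Rightarrow> (nat \<Rightarrow> complex mat) \<Rightarrow> bool" where
  "is_DRS m k d v V W \<longleftrightarrow> is_Pv m k d v V \<and> is_dual m k d V W"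

definition mtrace :: "complex mat \<Rightarrow> complex" where
  "mtrace A = (\<Sum>i<dim_row A. A $$ (i, i))"

(* joint frame potential FP(V,W) = tr S_V^2 + tr S_W^2 (real, since S_V, S_W are
   Hermitian; we take the real part explicitly) *)
definition FP :: "nat \<Rightarrow> nat \<Rightarrow> (nat \<Rightarrow> complex mat) \<Rightarrow> (nat \<Rightarrow> complex mat) \<Rightarrow> real" where
  "FP m d V W = Re (mtrace (rs_op m d V * rs_op m d V)) + Re (mtrace (rs_op m d W * rs_op m d W))"

definition frob_norm :: "complex mat \<Rightarrow> real" where
  "frob_norm A = sqrt (\<Sum>a<dim_row A. \<Sum>b<dim_col A. (cmod (A $$ (a, b)))\<^sup>2)"

definition dP :: "nat \<Rightarrow> (nat \<Rightarrow> complex mat) \<Rightarrow> (nat \<Rightarrow> complex mat) \<Rightarrow> real" where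
  "dP m V W = sqrt (\<Sum>i<m. (frob_norm (V i - W i))\<^sup>2)"

definition local_dP_minimizer :: "nat \<Rightarrow> (nat \<Rightarrow> nat) \<Rightarrow> nat \<Rightarrow> (nat \<Rightarrow> real) \<Rightarrow> (nat \<Rightarrow> complex mat) \<Rightarrow> (nat \<Rightarrow> complex mat) \<Rightarrow> bool" where
  "local_dP_minimizer m k d v V W \<longleftrightarrow> is_DRS m k d v V W \<and>
     (\<exists>\<epsilon>>0. \<forall>V' W'. is_DRS m k d v V' W' \<and> dP m V V' + dP m W W' < \<epsilon> \<longrightarrow>
        FP m d V' W' \<ge> FP m d V W)"

end

theory Submission
  imports Defs
begin


type_synonym cm = "complex mat"

lemma adj_dim[simp]: "dim_row (mat_adjoint A) = dim_col A" "dim_col (mat_adjoint A) = dim_row A"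
  unfolding mat_adjoint_def by auto

lemma adj_index[simp]: "i < dim_col A \<Longrightarrow> j < dim_row A \<Longrightarrow> mat_adjoint (A::cm) $$ (i,j) = cnj (A $$ (j,i))"
  unfolding mat_adjoint_def by (auto simp: mat_of_rows_index)

lemma adj_carrier[simp]: "A \<in> carrier_mat r c \<Longrightarrow> mat_adjoint A \<in> carrier_mat c r"
  by auto

lemma adj_adj: "mat_adjoint (mat_adjoint (A::cm)) = A"
  by (rule eq_matI) auto

lemma adj_mult: assumes "(A::cm) \<in> carrier_mat n p" "B \<in> carrier_mat p q"
  shows "mat_adjoint (A * B) = mat_adjoint B * mat_adjoint A"
  using assms by (intro eq_matI) (auto simp: scalar_prod_def cnj_sum mult.commute)

lemma adj_add: assumes "(A::cm) \<in> carrier_mat n p" "B \<in> carrier_mat n p"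
  shows "mat_adjoint (A + B) = mat_adjoint A + mat_adjoint B"
  using assms by (intro eq_matI) auto

lemma adj_minus: assumes "(A::cm) \<in> carrier_mat n p" "B \<in> carrier_mat n p"
  shows "mat_adjoint (A - B) = mat_adjoint A - mat_adjoint B"
  using assms by (intro eq_matI) auto

lemma adj_smult_real: "mat_adjoint (complex_of_real c \<cdot>\<^sub>m (A::cm)) = complex_of_real c \<cdot>\<^sub>m mat_adjoint A"
  by (intro eq_matI) auto

lemma adj_one: "mat_adjoint (1\<^sub>m n :: cm) = 1\<^sub>m n"
  by (intro eq_matI) auto

lemma adj_zero: "mat_adjoint (0\<^sub>m r c :: cm) = 0\<^sub>m c r"
  by (intro eq_matI) auto

definition msum :: "nat \<Rightarrow> nat \<Rightarrow> nat \<Rightarrow> (nat \<Rightarrow> cm) \<Rightarrow> cm" where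
  "msum r c m f = mat r c (\<lambda>(a, b). \<Sum>i<m. f i $$ (a, b))"

lemma msum_carrier[simp]: "msum r c m f \<in> carrier_mat r c"
  "dim_row (msum r c m f) = r" "dim_col (msum r c m f) = c"
  unfolding msum_def by auto

lemma msum_index[simp]: "a < r \<Longrightarrow> b < c \<Longrightarrow> msum r c m f $$ (a,b) = (\<Sum>i<m. f i $$ (a, b))"
  unfolding msum_def by auto

lemma rs_op_msum: "rs_op m d V = msum d d m (\<lambda>i. mat_adjoint (V i) * V i)"
  unfolding rs_op_def msum_def by simp

lemma msum_add: assumes f: "\<forall>i<m. f i \<in> carrier_mat r c" and g: "\<forall>i<m. g i \<in> carrier_mat r c"
  shows "msum r c m (\<lambda>i. f i + g i) = msum r c m f + msum r c m g"
proof (rule eq_matI)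
  fix a b assume "a < dim_row (msum r c m f + msum r c m g)" "b < dim_col (msum r c m f + msum r c m g)"
  hence ab: "a < r" "b < c" by simp_all
  have "(\<Sum>i<m. (f i + g i) $$ (a,b)) = (\<Sum>i<m. f i $$ (a,b) + g i $$ (a,b))"
  proof (rule sum.cong[OF refl])
    fix i assume "i \<in> {..<m}" 
    hence "f i \<in> carrier_mat r c" "g i \<in> carrier_mat r c" using f g by auto
    thus "(f i + g i) $$ (a,b) = f i $$ (a,b) + g i $$ (a,b)" using ab by simp
  qed
  thus "msum r c m (\<lambda>i. f i + g i) $$ (a,b) = (msum r c m f + msum r c m g) $$ (a,b)"
    using ab by (simp add: sum.distrib)
qed simp_all

lemma msum_minus: assumes f: "\<forall>i<m. f i \<in> carrier_mat r c" and g: "\<forall>i<m. g i \<in> carrier_mat r c"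
  shows "msum r c m (\<lambda>i. f i - g i) = msum r c m f - msum r c m g"
proof (rule eq_matI)
  fix a b assume "a < dim_row (msum r c m f - msum r c m g)" "b < dim_col (msum r c m f - msum r c m g)"
  hence ab: "a < r" "b < c" by simp_all
  have "(\<Sum>i<m. (f i - g i) $$ (a,b)) = (\<Sum>i<m. f i $$ (a,b) - g i $$ (a,b))"
  proof (rule sum.cong[OF refl])
    fix i assume "i \<in> {..<m}" 
    hence "f i \<in> carrier_mat r c" "g i \<in> carrier_mat r c" using f g by auto
    thus "(f i - g i) $$ (a,b) = f i $$ (a,b) - g i $$ (a,b)" using ab by simp
  qed
  thus "msum r c m (\<lambda>i. f i - g i) $$ (a,b) = (msum r c m f - msum r c m g) $$ (a,b)"
    using ab by (simp add: sum_subtractf)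
qed simp_all

lemma msum_smult: assumes f: "\<forall>i<m. f i \<in> carrier_mat r c"
  shows "msum r c m (\<lambda>i. x \<cdot>\<^sub>m f i) = x \<cdot>\<^sub>m msum r c m f"
proof (rule eq_matI)
  fix a b assume "a < dim_row (x \<cdot>\<^sub>m msum r c m f)" "b < dim_col (x \<cdot>\<^sub>m msum r c m f)"
  hence ab: "a < r" "b < c" by simp_all
  have "(\<Sum>i<m. (x \<cdot>\<^sub>m f i) $$ (a,b)) = (\<Sum>i<m. x * f i $$ (a,b))"
  proof (rule sum.cong[OF refl])
    fix i assume "i \<in> {..<m}" 
    hence "f i \<in> carrier_mat r c" using f by auto
    thus "(x \<cdot>\<^sub>m f i) $$ (a,b) = x * f i $$ (a,b)" using ab by simp
  qed
  thus "msum r c m (\<lambda>i. x \<cdot>\<^sub>m f i) $$ (a,b) = (x \<cdot>\<^sub>m msum r c m f) $$ (a,b)"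
    using ab by (simp add: sum_distrib_left)
qed simp_all

lemma msum_zero: "msum r c m (\<lambda>i. 0\<^sub>m r c) = 0\<^sub>m r c"
  by (rule eq_matI) simp_all

lemma msum_cong: "(\<And>i. i < m \<Longrightarrow> f i = g i) \<Longrightarrow> msum r c m f = msum r c m g"
  unfolding msum_def by (intro arg_cong[where f = "mat r c"] ext) (auto intro: sum.cong)

lemma mult_index_sum: assumes "(A::cm) \<in> carrier_mat q r" "B \<in> carrier_mat r c" "a < q" "b < c"
  shows "(A * B) $$ (a,b) = (\<Sum>j<r. A $$ (a,j) * B $$ (j,b))"
proof -
  have "(A * B) $$ (a,b) = row A a \<bullet> col B b" using assms by simp
  also have "\<dots> = (\<Sum>j\<in>{0..<r}. row A a $ j * col B b $ j)" using assms by (simp add: scalar_prod_def)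
  also have "\<dots> = (\<Sum>j<r. A $$ (a,j) * B $$ (j,b))" 
    unfolding lessThan_atLeast0 using assms by (intro sum.cong refl) simp
  finally show ?thesis .
qed

lemma msum_mult_left: assumes f: "\<forall>i<m. f i \<in> carrier_mat r c" and A: "(A::cm) \<in> carrier_mat q r"
  shows "A * msum r c m f = msum q c m (\<lambda>i. A * f i)"
proof (rule eq_matI)
  fix a b assume "a < dim_row (msum q c m (\<lambda>i. A * f i))" "b < dim_col (msum q c m (\<lambda>i. A * f i))"
  hence ab: "a < q" "b < c" by simp_all
  have "(A * msum r c m f) $$ (a,b) = (\<Sum>j<r. A $$ (a,j) * msum r c m f $$ (j,b))"
    by (rule mult_index_sum[OF A msum_carrier(1) ab])
  also have "\<dots> = (\<Sum>j<r. A $$ (a,j) * (\<Sum>i<m. f i $$ (j,b)))"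
    using ab by (intro sum.cong refl) simp
  also have "\<dots> = (\<Sum>i<m. \<Sum>j<r. A $$ (a,j) * f i $$ (j,b))"
    unfolding sum_distrib_left by (rule sum.swap)
  also have "\<dots> = (\<Sum>i<m. (A * f i) $$ (a,b))"
    using ab f by (intro sum.cong refl) (simp add: mult_index_sum[OF A _ ab])
  also have "\<dots> = msum q c m (\<lambda>i. A * f i) $$ (a,b)" using ab by simp
  finally show "(A * msum r c m f) $$ (a,b) = msum q c m (\<lambda>i. A * f i) $$ (a,b)" .
qed (use A in simp_all)

lemma msum_mult_right: assumes f: "\<forall>i<m. f i \<in> carrier_mat r c" and A: "(A::cm) \<in> carrier_mat c q"
  shows "msum r c m f * A = msum r q m (\<lambda>i. f i * A)"
proof (rule eq_matI)
  fix a b assume "a < dim_row (msum r q m (\<lambda>i. f i * A))" "b < dim_col (msum r q m (\<lambda>i. f i * A))"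
  hence ab: "a < r" "b < q" by simp_all
  have "(msum r c m f * A) $$ (a,b) = (\<Sum>j<c. msum r c m f $$ (a,j) * A $$ (j,b))"
    by (rule mult_index_sum[OF msum_carrier(1) A ab])
  also have "\<dots> = (\<Sum>j<c. (\<Sum>i<m. f i $$ (a,j)) * A $$ (j,b))"
    using ab by (intro sum.cong refl) simp
  also have "\<dots> = (\<Sum>i<m. \<Sum>j<c. f i $$ (a,j) * A $$ (j,b))"
    unfolding sum_distrib_right by (rule sum.swap)
  also have "\<dots> = (\<Sum>i<m. (f i * A) $$ (a,b))"
    using ab f by (intro sum.cong refl) (simp add: mult_index_sum[OF _ A ab])
  also have "\<dots> = msum r q m (\<lambda>i. f i * A) $$ (a,b)" using ab by simp
  finally show "(msum r c m f * A) $$ (a,b) = msum r q m (\<lambda>i. f i * A) $$ (a,b)" .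
qed (use A in simp_all)

lemma adj_msum: assumes f: "\<forall>i<m. f i \<in> carrier_mat r c"
  shows "mat_adjoint (msum r c m f) = msum c r m (\<lambda>i. mat_adjoint (f i))"
proof (rule eq_matI)
  fix a b assume "a < dim_row (msum c r m (\<lambda>i. mat_adjoint (f i)))" "b < dim_col (msum c r m (\<lambda>i. mat_adjoint (f i)))"
  hence ab: "a < c" "b < r" by simp_all
  have "(\<Sum>i<m. cnj (f i $$ (b,a))) = (\<Sum>i<m. mat_adjoint (f i) $$ (a,b))"
  proof (rule sum.cong[OF refl])
    fix i assume "i \<in> {..<m}" 
    hence "f i \<in> carrier_mat r c" using f by auto
    thus "cnj (f i $$ (b,a)) = mat_adjoint (f i) $$ (a,b)" using ab by simp
  qed
  thus "mat_adjoint (msum r c m f) $$ (a,b) = msum c r m (\<lambda>i. mat_adjoint (f i)) $$ (a,b)"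
    using ab by (simp add: cnj_sum)
qed simp_all

lemma mtrace_msum: assumes f: "\<forall>i<m. f i \<in> carrier_mat r r"
  shows "mtrace (msum r r m f) = (\<Sum>i<m. mtrace (f i))"
proof -
  have "mtrace (msum r r m f) = (\<Sum>a<r. \<Sum>i<m. f i $$ (a,a))" unfolding mtrace_def by simp
  also have "\<dots> = (\<Sum>i<m. \<Sum>a<r. f i $$ (a,a))" by (rule sum.swap)
  also have "\<dots> = (\<Sum>i<m. mtrace (f i))" 
  proof (rule sum.cong[OF refl])
    fix i assume "i \<in> {..<m}" 
    hence "f i \<in> carrier_mat r r" using f by auto
    thus "(\<Sum>a<r. f i $$ (a,a)) = mtrace (f i)" unfolding mtrace_def by simp
  qed
  finally show ?thesis .
qed

lemma mtrace_add: assumes "(A::cm) \<in> carrier_mat r r" "B \<in> carrier_mat r r"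
  shows "mtrace (A + B) = mtrace A + mtrace B"
proof -
  have "mtrace (A + B) = (\<Sum>a<r. A $$ (a,a) + B $$ (a,a))"
    unfolding mtrace_def using assms by (intro sum.cong) simp_all
  thus ?thesis unfolding mtrace_def using assms by (simp add: sum.distrib)
qed

lemma mtrace_smult: assumes "(A::cm) \<in> carrier_mat r r" shows "mtrace (x \<cdot>\<^sub>m A) = x * mtrace A"
proof -
  have "mtrace (x \<cdot>\<^sub>m A) = (\<Sum>a<r. x * A $$ (a,a))"
    unfolding mtrace_def using assms by (intro sum.cong) simp_all
  thus ?thesis unfolding mtrace_def using assms by (simp add: sum_distrib_left)
qed

lemma mtrace_comm: assumes "(A::cm) \<in> carrier_mat r c" "B \<in> carrier_mat c r"
  shows "mtrace (A * B) = mtrace (B * A)"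
proof -
  have "mtrace (A * B) = (\<Sum>a<r. (A * B) $$ (a,a))" using assms by (simp add: mtrace_def)
  also have "\<dots> = (\<Sum>a<r. \<Sum>j<c. A $$ (a,j) * B $$ (j,a))"
    by (intro sum.cong refl, rule mult_index_sum[OF assms]) auto
  also have "\<dots> = (\<Sum>j<c. \<Sum>a<r. B $$ (j,a) * A $$ (a,j))"
    by (subst sum.swap) (simp add: mult.commute)
  also have "\<dots> = (\<Sum>j<c. (B * A) $$ (j,j))"
    by (intro sum.cong refl, rule mult_index_sum[OF assms(2,1), symmetric]) auto
  also have "\<dots> = mtrace (B * A)" using assms by (simp add: mtrace_def)
  finally show ?thesis .
qed

lemma frob_sq: "(frob_norm A)\<^sup>2 = (\<Sum>a<dim_row A. \<Sum>b<dim_col A. (cmod (A $$ (a, b)))\<^sup>2)"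
  unfolding frob_norm_def by (simp add: sum_nonneg)

lemma cnj_sq: "z * cnj z = complex_of_real ((cmod z)\<^sup>2)"
  by (rule complex_norm_square[symmetric])

lemma mtrace_frob: "mtrace (mat_adjoint (A::cm) * A) = complex_of_real ((frob_norm A)\<^sup>2)"
proof -
  have A: "A \<in> carrier_mat (dim_row A) (dim_col A)" by auto
  have "mtrace (mat_adjoint A * A) = (\<Sum>b<dim_col A. (mat_adjoint A * A) $$ (b,b))"
    unfolding mtrace_def by simp
  also have "\<dots> = (\<Sum>b<dim_col A. \<Sum>a<dim_row A. complex_of_real ((cmod (A $$ (a, b)))\<^sup>2))"
  proof (rule sum.cong[OF refl])
    fix b assume b: "b \<in> {..<dim_col A}"
    have "(mat_adjoint A * A) $$ (b, b) = (\<Sum>a<dim_row A. mat_adjoint A $$ (b,a) * A $$ (a,b))"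
      using b by (intro mult_index_sum[OF adj_carrier[OF A] A]) auto
    also have "\<dots> = (\<Sum>a<dim_row A. complex_of_real ((cmod (A $$ (a, b)))\<^sup>2))"
    proof (rule sum.cong[OF refl])
      fix a assume a: "a \<in> {..<dim_row A}"
      have "mat_adjoint A $$ (b,a) * A $$ (a,b) = A $$ (a,b) * cnj (A $$ (a,b))"
        using a b by simp
      thus "mat_adjoint A $$ (b,a) * A $$ (a,b) = complex_of_real ((cmod (A $$ (a, b)))\<^sup>2)"
        by (simp only: cnj_sq)
    qed
    finally show "(mat_adjoint A * A) $$ (b, b) = (\<Sum>a<dim_row A. complex_of_real ((cmod (A $$ (a, b)))\<^sup>2))" .
  qed
  also have "\<dots> = (\<Sum>a<dim_row A. \<Sum>b<dim_col A. complex_of_real ((cmod (A $$ (a, b)))\<^sup>2))"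
    by (rule sum.swap)
  also have "\<dots> = complex_of_real ((frob_norm A)\<^sup>2)"
    unfolding frob_sq by (simp only: of_real_sum)
  finally show ?thesis .
qed

lemma frob_entry_le: assumes "a < dim_row A" "b < dim_col A"
  shows "(cmod (A $$ (a,b)))\<^sup>2 \<le> (frob_norm A)\<^sup>2"
proof -
  have "(cmod (A $$ (a,b)))\<^sup>2 \<le> (\<Sum>b'<dim_col A. (cmod (A $$ (a, b')))\<^sup>2)"
    by (rule member_le_sum[where f = "\<lambda>b'. (cmod (A $$ (a, b')))\<^sup>2"]) (use assms in auto)
  also have "\<dots> \<le> (\<Sum>a'<dim_row A. \<Sum>b'<dim_col A. (cmod (A $$ (a', b')))\<^sup>2)"
    by (rule member_le_sum[where f = "\<lambda>a'. \<Sum>b'<dim_col A. (cmod (A $$ (a', b')))\<^sup>2"])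
      (use assms in \<open>auto intro: sum_nonneg\<close>)
  finally show ?thesis unfolding frob_sq .
qed

lemma frob_zero: assumes A: "(A::cm) \<in> carrier_mat r c" and z: "frob_norm A = 0" shows "A = 0\<^sub>m r c"
proof (rule eq_matI)
  fix a b assume "a < dim_row (0\<^sub>m r c :: cm)" "b < dim_col (0\<^sub>m r c :: cm)"
  hence ab: "a < r" "b < c" by simp_all
  hence "(cmod (A $$ (a,b)))\<^sup>2 \<le> (frob_norm A)\<^sup>2" using A by (intro frob_entry_le) auto
  hence "A $$ (a,b) = 0" using z by simp
  thus "A $$ (a,b) = 0\<^sub>m r c $$ (a,b)" using ab by simp
qed (use A in simp_all)

lemma frob_smult: "frob_norm (complex_of_real x \<cdot>\<^sub>m (A::cm)) = \<bar>x\<bar> * frob_norm A"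
proof -
  have "(\<Sum>a<dim_row A. \<Sum>b<dim_col A. (cmod ((complex_of_real x \<cdot>\<^sub>m A) $$ (a, b)))\<^sup>2)
     = (\<Sum>a<dim_row A. \<Sum>b<dim_col A. x\<^sup>2 * (cmod (A $$ (a, b)))\<^sup>2)"
  proof (rule sum.cong[OF refl], rule sum.cong[OF refl])
    fix a b assume "a \<in> {..<dim_row A}" "b \<in> {..<dim_col A}"
    hence "(complex_of_real x \<cdot>\<^sub>m A) $$ (a, b) = complex_of_real x * A $$ (a,b)" by simp
    thus "(cmod ((complex_of_real x \<cdot>\<^sub>m A) $$ (a, b)))\<^sup>2 = x\<^sup>2 * (cmod (A $$ (a, b)))\<^sup>2"
      by (simp only: norm_mult norm_of_real power_mult_distrib power2_abs)
  qed
  also have "\<dots> = x\<^sup>2 * (\<Sum>a<dim_row A. \<Sum>b<dim_col A. (cmod (A $$ (a, b)))\<^sup>2)"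
    by (simp only: sum_distrib_left)
  finally have e: "(\<Sum>a<dim_row A. \<Sum>b<dim_col A. (cmod ((complex_of_real x \<cdot>\<^sub>m A) $$ (a, b)))\<^sup>2)
     = x\<^sup>2 * (\<Sum>a<dim_row A. \<Sum>b<dim_col A. (cmod (A $$ (a, b)))\<^sup>2)" .
  have "frob_norm (complex_of_real x \<cdot>\<^sub>m (A::cm)) = sqrt (x\<^sup>2 * (\<Sum>a<dim_row A. \<Sum>b<dim_col A. (cmod (A $$ (a, b)))\<^sup>2))"
    unfolding frob_norm_def index_smult_mat(2,3) e ..
  also have "\<dots> = sqrt (x\<^sup>2) * frob_norm A" unfolding frob_norm_def by (rule real_sqrt_mult)
  finally show ?thesis by (simp only: real_sqrt_abs)
qed



lemma adj_mult_sandwich: assumes P: "(P::cm) \<in> carrier_mat d n" and V: "V \<in> carrier_mat k d"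
  shows "mat_adjoint P * (mat_adjoint V * V) * P = mat_adjoint (V * P) * (V * P)"
proof -
  have "mat_adjoint P * (mat_adjoint V * V) * P = (mat_adjoint P * mat_adjoint V) * V * P"
    using P V by (simp add: assoc_mult_mat[symmetric, of _ n d _ k _ d])
  also have "\<dots> = (mat_adjoint P * mat_adjoint V) * (V * P)"
    using P V by (intro assoc_mult_mat[of _ n k _ d _ n]) auto
  also have "mat_adjoint P * mat_adjoint V = mat_adjoint (V * P)"
    using P V by (simp add: adj_mult)
  finally show ?thesis .
qed

lemma trace_sandwich: assumes V: "\<forall>j<m. V j \<in> carrier_mat (k j) d" and P: "(P::cm) \<in> carrier_mat d n"
  shows "mtrace (mat_adjoint P * rs_op m d V * P) = complex_of_real (\<Sum>j<m. (frob_norm (V j * P))\<^sup>2)"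
proof -
  have c1: "\<forall>j<m. mat_adjoint (V j) * V j \<in> carrier_mat d d" using V by (metis adj_carrier mult_carrier_mat)
  have c2: "\<forall>j<m. mat_adjoint P * (mat_adjoint (V j) * V j) \<in> carrier_mat n d" using V P c1 by (metis adj_carrier mult_carrier_mat)
  have c3: "\<forall>j<m. mat_adjoint (V j * P) * (V j * P) \<in> carrier_mat n n" using V P by (metis adj_carrier mult_carrier_mat)
  have "mat_adjoint P * rs_op m d V * P = msum n d m (\<lambda>j. mat_adjoint P * (mat_adjoint (V j) * V j)) * P"
    unfolding rs_op_msum using P by (subst msum_mult_left[OF c1]) auto
  also have "\<dots> = msum n n m (\<lambda>j. mat_adjoint P * (mat_adjoint (V j) * V j) * P)"
    using P by (subst msum_mult_right[OF c2]) auto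
  also have "\<dots> = msum n n m (\<lambda>j. mat_adjoint (V j * P) * (V j * P))"
    using V P by (intro msum_cong adj_mult_sandwich) auto
  finally have "mtrace (mat_adjoint P * rs_op m d V * P) = (\<Sum>j<m. mtrace (mat_adjoint (V j * P) * (V j * P)))"
    using mtrace_msum[OF c3] by simp
  also have "\<dots> = (\<Sum>j<m. complex_of_real ((frob_norm (V j * P))\<^sup>2))"
    by (simp only: mtrace_frob)
  finally show ?thesis by simp
qed


lemma sum_frob_zero: fixes m :: nat assumes "(\<Sum>j<m. (frob_norm (V j))\<^sup>2) = 0" "j < m"
  shows "frob_norm (V j) = 0"
proof -
  have "\<forall>j\<in>{..<m}. (frob_norm (V j))\<^sup>2 = 0"
    using sum_nonneg_eq_0_iff[OF finite_lessThan[of m], of "\<lambda>j. (frob_norm (V j))\<^sup>2"] assms(1) by simp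
  thus ?thesis using assms(2) by simp
qed

lemma adj_dual: assumes V: "\<forall>i<m. V i \<in> carrier_mat (k i) d" and W: "\<forall>i<m. W i \<in> carrier_mat (k i) d"
  and dual: "msum d d m (\<lambda>i. mat_adjoint (W i) * V i) = 1\<^sub>m d"
  shows "msum d d m (\<lambda>i. mat_adjoint (V i) * W i) = 1\<^sub>m d"
proof -
  have c: "\<forall>i<m. mat_adjoint (W i) * V i \<in> carrier_mat d d" using V W by (metis adj_carrier mult_carrier_mat)
  have "1\<^sub>m d = mat_adjoint (msum d d m (\<lambda>i. mat_adjoint (W i) * V i))" using dual adj_one by simp
  also have "\<dots> = msum d d m (\<lambda>i. mat_adjoint (mat_adjoint (W i) * V i))" by (rule adj_msum[OF c])
  also have "\<dots> = msum d d m (\<lambda>i. mat_adjoint (V i) * W i)"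
  proof (rule msum_cong)
    fix i assume i: "i < m"
    show "mat_adjoint (mat_adjoint (W i) * V i) = mat_adjoint (V i) * W i"
      using V W i by (subst adj_mult[of _ d "k i" _ d]) (auto simp: adj_adj)
  qed
  finally show ?thesis by simp
qed

lemma dual_invertible: assumes V: "\<forall>i<m. V i \<in> carrier_mat (k i) d" and W: "\<forall>i<m. W i \<in> carrier_mat (k i) d"
  and dual: "msum d d m (\<lambda>i. mat_adjoint (W i) * V i) = 1\<^sub>m d"
  shows "invertible_mat (rs_op m d W)"
proof -
  define R where "R = rs_op m d W"
  have Rc: "R \<in> carrier_mat d d" unfolding R_def rs_op_msum by simp
  have "det R \<noteq> 0"
  proof
    assume "det R = 0"
    then obtain x where x: "x \<in> carrier_vec d" "x \<noteq> 0\<^sub>v d" "R *\<^sub>v x = 0\<^sub>v d"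
      using det_0_iff_vec_prod_zero[OF Rc] by blast
    define X :: cm where "X = mat d 1 (\<lambda>(a,b). x $ a)"
    have Xc: "X \<in> carrier_mat d 1" unfolding X_def by simp
    have colX: "col X 0 = x" unfolding X_def using x(1) by (intro eq_vecI) auto
    have RX: "R * X = 0\<^sub>m d 1"
    proof (rule eq_matI)
      fix a b assume "a < dim_row (0\<^sub>m d 1 :: cm)" "b < dim_col (0\<^sub>m d 1 :: cm)"
      hence ab: "a < d" "b = 0" by auto
      have "(R * X) $$ (a,b) = row R a \<bullet> col X 0" using ab Rc Xc by simp
      also have "\<dots> = (R *\<^sub>v x) $ a" using ab Rc colX by simp
      also have "\<dots> = 0" using x(3) ab by simp
      finally show "(R * X) $$ (a,b) = 0\<^sub>m d 1 $$ (a,b)" using ab by simp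
    qed (use Rc Xc in simp_all)
    have "mat_adjoint X * R * X = 0\<^sub>m 1 1"
      using Rc Xc RX by (simp add: assoc_mult_mat[of _ 1 d _ d _ 1])
    hence "mtrace (mat_adjoint X * R * X) = 0" unfolding mtrace_def by simp
    hence "complex_of_real (\<Sum>j<m. (frob_norm (W j * X))\<^sup>2) = 0"
      using trace_sandwich[OF W Xc] unfolding R_def by simp
    hence s0: "(\<Sum>j<m. (frob_norm (W j * X))\<^sup>2) = 0" by (simp only: of_real_eq_0_iff)
    have WX: "\<forall>j<m. W j * X = 0\<^sub>m (k j) 1"
    proof (intro allI impI)
      fix j assume j: "j < m"
      have "frob_norm (W j * X) = 0" by (rule sum_frob_zero[OF s0 j])
      thus "W j * X = 0\<^sub>m (k j) 1" using W j Xc by (intro frob_zero) auto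
    qed
    have c: "\<forall>i<m. mat_adjoint (V i) * W i \<in> carrier_mat d d" using V W by (metis adj_carrier mult_carrier_mat)
    have "X = 1\<^sub>m d * X" using Xc by simp
    also have "\<dots> = msum d d m (\<lambda>i. mat_adjoint (V i) * W i) * X"
      using adj_dual[OF V W dual] by simp
    also have "\<dots> = msum d 1 m (\<lambda>i. mat_adjoint (V i) * W i * X)"
      by (rule msum_mult_right[OF c Xc])
    also have "\<dots> = msum d 1 m (\<lambda>i. 0\<^sub>m d 1)"
    proof (rule msum_cong)
      fix i assume i: "i < m"
      have "mat_adjoint (V i) * W i * X = mat_adjoint (V i) * (W i * X)"
        using V W Xc i by (intro assoc_mult_mat[of _ d "k i" _ d _ 1]) auto
      also have "\<dots> = 0\<^sub>m d 1" using WX i V right_mult_zero_mat[OF adj_carrier[of "V i" "k i" d], of 1] by simp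
      finally show "mat_adjoint (V i) * W i * X = 0\<^sub>m d 1" .
    qed
    also have "\<dots> = 0\<^sub>m d 1" by (rule msum_zero)
    finally have X0: "X = 0\<^sub>m d 1" .
    have "x = 0\<^sub>v d"
    proof (rule eq_vecI)
      fix a assume "a < dim_vec (0\<^sub>v d :: complex vec)"
      hence a: "a < d" by simp
      have "x $ a = X $$ (a, 0)" unfolding X_def using a by simp
      thus "x $ a = 0\<^sub>v d $ a" using X0 a by simp
    qed (use x in simp)
    with x(2) show False by simp
  qed
  from det_non_zero_imp_unit[OF Rc this, of "()"]
  obtain B where B: "B \<in> carrier_mat d d" "R * B = 1\<^sub>m d" "B * R = 1\<^sub>m d"
    unfolding Units_def ring_mat_def by auto
  show ?thesis unfolding R_def[symmetric] invertible_mat_def inverts_mat_def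
    using B Rc by (intro conjI exI[of _ B]) auto
qed



lemma smult_smult_mat': "(a::complex) \<cdot>\<^sub>m (b \<cdot>\<^sub>m M) = (a * b) \<cdot>\<^sub>m M"
  by (rule eq_matI) auto

lemma expand_sq:
  fixes t :: real
  assumes A: "(A::cm) \<in> carrier_mat k d" and P: "P \<in> carrier_mat d d" and B: "B \<in> carrier_mat k d"
  defines "c \<equiv> complex_of_real t"
  shows "mat_adjoint (A * P + c \<cdot>\<^sub>m B) * (A * P + c \<cdot>\<^sub>m B) =
    (mat_adjoint P * (mat_adjoint A * A) * P + c \<cdot>\<^sub>m (mat_adjoint P * (mat_adjoint A * B)))
    + (c \<cdot>\<^sub>m (mat_adjoint B * A * P) + (c * c) \<cdot>\<^sub>m (mat_adjoint B * B))"
proof -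
  have cAP: "A * P \<in> carrier_mat k d" using A P by simp
  have ccB: "c \<cdot>\<^sub>m B \<in> carrier_mat k d" using B by simp
  have aP: "mat_adjoint P \<in> carrier_mat d d" and aA: "mat_adjoint A \<in> carrier_mat d k"
    and aB: "mat_adjoint B \<in> carrier_mat d k" using A P B by auto
  have cPA: "mat_adjoint P * mat_adjoint A \<in> carrier_mat d k" using aP aA by simp
  have cAPB: "A * P + c \<cdot>\<^sub>m B \<in> carrier_mat k d" using cAP ccB by simp
  have caB: "c \<cdot>\<^sub>m mat_adjoint B \<in> carrier_mat d k" using aB by simp
  have e1: "mat_adjoint (A * P + c \<cdot>\<^sub>m B) = mat_adjoint P * mat_adjoint A + c \<cdot>\<^sub>m mat_adjoint B"
    using adj_add[OF cAP ccB] adj_mult[OF A P] by (simp add: c_def adj_smult_real)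
  have e2: "(mat_adjoint P * mat_adjoint A + c \<cdot>\<^sub>m mat_adjoint B) * (A * P + c \<cdot>\<^sub>m B)
     = ((mat_adjoint P * mat_adjoint A) * (A * P) + (mat_adjoint P * mat_adjoint A) * (c \<cdot>\<^sub>m B))
     + ((c \<cdot>\<^sub>m mat_adjoint B) * (A * P) + (c \<cdot>\<^sub>m mat_adjoint B) * (c \<cdot>\<^sub>m B))"
    by (simp only: add_mult_distrib_mat[OF cPA caB cAPB]
        mult_add_distrib_mat[OF cPA cAP ccB] mult_add_distrib_mat[OF caB cAP ccB])
  have t1: "(mat_adjoint P * mat_adjoint A) * (A * P) = mat_adjoint P * (mat_adjoint A * A) * P"
  proof -
    have "mat_adjoint P * (mat_adjoint A * A) * P = mat_adjoint P * ((mat_adjoint A * A) * P)"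
      using aP aA A P by (intro assoc_mult_mat[of _ d d _ d _ d]) auto
    also have "(mat_adjoint A * A) * P = mat_adjoint A * (A * P)"
      using aA A P by (intro assoc_mult_mat[of _ d k _ d _ d])
    also have "mat_adjoint P * (mat_adjoint A * (A * P)) = (mat_adjoint P * mat_adjoint A) * (A * P)"
      using aP aA cAP by (intro assoc_mult_mat[of _ d d _ k _ d, symmetric])
    finally show ?thesis by simp
  qed
  have t2: "(mat_adjoint P * mat_adjoint A) * (c \<cdot>\<^sub>m B) = c \<cdot>\<^sub>m (mat_adjoint P * (mat_adjoint A * B))"
    using aP aA B cPA by (simp add: mult_smult_distrib[OF cPA B] assoc_mult_mat[of _ d d _ k _ d])
  have t3: "(c \<cdot>\<^sub>m mat_adjoint B) * (A * P) = c \<cdot>\<^sub>m (mat_adjoint B * A * P)"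
    using aB A P by (simp add: mult_smult_assoc_mat[OF aB cAP] assoc_mult_mat[of _ d k _ d _ d])
  have t4: "(c \<cdot>\<^sub>m mat_adjoint B) * (c \<cdot>\<^sub>m B) = (c * c) \<cdot>\<^sub>m (mat_adjoint B * B)"
    using aB B by (simp add: mult_smult_assoc_mat[OF aB ccB] mult_smult_distrib[OF aB B] smult_smult_mat')
  show ?thesis unfolding e1 e2 t1 t2 t3 t4 ..
qed

lemma expand_lin:
  fixes t :: real
  assumes A: "(A::cm) \<in> carrier_mat k d" and P: "P \<in> carrier_mat d d" and B: "B \<in> carrier_mat k d"
  defines "c \<equiv> complex_of_real t"
  shows "mat_adjoint (A * P + c \<cdot>\<^sub>m B) * A =
    mat_adjoint P * (mat_adjoint A * A) + c \<cdot>\<^sub>m (mat_adjoint B * A)"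
proof -
  have cAP: "A * P \<in> carrier_mat k d" using A P by simp
  have ccB: "c \<cdot>\<^sub>m B \<in> carrier_mat k d" using B by simp
  have aP: "mat_adjoint P \<in> carrier_mat d d" and aA: "mat_adjoint A \<in> carrier_mat d k"
    and aB: "mat_adjoint B \<in> carrier_mat d k" using A P B by auto
  have cPA: "mat_adjoint P * mat_adjoint A \<in> carrier_mat d k" using aP aA by simp
  have cAPB: "A * P + c \<cdot>\<^sub>m B \<in> carrier_mat k d" using cAP ccB by simp
  have caB: "c \<cdot>\<^sub>m mat_adjoint B \<in> carrier_mat d k" using aB by simp
  have e1: "mat_adjoint (A * P + c \<cdot>\<^sub>m B) = mat_adjoint P * mat_adjoint A + c \<cdot>\<^sub>m mat_adjoint B"
    using adj_add[OF cAP ccB] adj_mult[OF A P] by (simp add: c_def adj_smult_real)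
  have "(mat_adjoint P * mat_adjoint A + c \<cdot>\<^sub>m mat_adjoint B) * A
     = (mat_adjoint P * mat_adjoint A) * A + (c \<cdot>\<^sub>m mat_adjoint B) * A"
    by (rule add_mult_distrib_mat[OF cPA caB A])
  also have "\<dots> = mat_adjoint P * (mat_adjoint A * A) + c \<cdot>\<^sub>m (mat_adjoint B * A)"
    using aP aA A aB by (simp add: mult_smult_assoc_mat[OF aB A] assoc_mult_mat[of _ d d _ k _ d])
  finally show ?thesis unfolding e1 .
qed

lemma tr_expand:
  assumes A: "(A::cm) \<in> carrier_mat d d" and B: "B \<in> carrier_mat d d"
  shows "Re (mtrace ((A + complex_of_real r \<cdot>\<^sub>m B) * (A + complex_of_real r \<cdot>\<^sub>m B)))
    = Re (mtrace (A * A)) + 2 * r * Re (mtrace (A * B)) + r\<^sup>2 * Re (mtrace (B * B))"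
proof -
  define s where "s = complex_of_real r"
  have sB: "s \<cdot>\<^sub>m B \<in> carrier_mat d d" using B by simp
  have AsB: "A + s \<cdot>\<^sub>m B \<in> carrier_mat d d" using A sB by simp
  have "(A + s \<cdot>\<^sub>m B) * (A + s \<cdot>\<^sub>m B) = (A * A + A * (s \<cdot>\<^sub>m B)) + ((s \<cdot>\<^sub>m B) * A + (s \<cdot>\<^sub>m B) * (s \<cdot>\<^sub>m B))"
    by (simp only: add_mult_distrib_mat[OF A sB AsB]
        mult_add_distrib_mat[OF A A sB] mult_add_distrib_mat[OF sB A sB])
  also have "\<dots> = (A * A + s \<cdot>\<^sub>m (A * B)) + (s \<cdot>\<^sub>m (B * A) + (s * s) \<cdot>\<^sub>m (B * B))"
    using A B by (simp add: mult_smult_distrib[OF A B] mult_smult_assoc_mat[OF B A]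
        mult_smult_assoc_mat[OF B sB] mult_smult_distrib[OF B B] smult_smult_mat')
  finally have e: "(A + s \<cdot>\<^sub>m B) * (A + s \<cdot>\<^sub>m B) = (A * A + s \<cdot>\<^sub>m (A * B)) + (s \<cdot>\<^sub>m (B * A) + (s * s) \<cdot>\<^sub>m (B * B))" .
  have AA: "A * A \<in> carrier_mat d d" and AB: "A * B \<in> carrier_mat d d" and BA: "B * A \<in> carrier_mat d d"
    and BB: "B * B \<in> carrier_mat d d" using A B by auto
  have "mtrace ((A + s \<cdot>\<^sub>m B) * (A + s \<cdot>\<^sub>m B)) = mtrace (A * A) + s * mtrace (A * B) + (s * mtrace (B * A) + (s * s) * mtrace (B * B))"
    unfolding e using AA AB BA BB
    by (simp add: mtrace_add[of _ d] mtrace_smult[of _ d])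
  also have "mtrace (B * A) = mtrace (A * B)" by (rule mtrace_comm[OF B A])
  finally show ?thesis unfolding s_def by (simp add: power2_eq_square algebra_simps)
qed

lemma msum_adj_swap: assumes A: "\<forall>i<m. (A i::cm) \<in> carrier_mat (k i) d" and B: "\<forall>i<m. B i \<in> carrier_mat (k i) d"
  shows "msum d d m (\<lambda>i. mat_adjoint (A i) * B i) = mat_adjoint (msum d d m (\<lambda>i. mat_adjoint (B i) * A i))"
proof -
  have c: "\<forall>i<m. mat_adjoint (B i) * A i \<in> carrier_mat d d" using A B by (metis adj_carrier mult_carrier_mat)
  have "mat_adjoint (msum d d m (\<lambda>i. mat_adjoint (B i) * A i)) = msum d d m (\<lambda>i. mat_adjoint (mat_adjoint (B i) * A i))"
    by (rule adj_msum[OF c])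
  also have "\<dots> = msum d d m (\<lambda>i. mat_adjoint (A i) * B i)"
  proof (rule msum_cong)
    fix i assume i: "i < m"
    show "mat_adjoint (mat_adjoint (B i) * A i) = mat_adjoint (A i) * B i"
      using A B i by (subst adj_mult[of _ d "k i" _ d]) (auto simp: adj_adj)
  qed
  finally show ?thesis by simp
qed

lemma rs_op_adj: assumes "\<forall>i<m. (V i::cm) \<in> carrier_mat (k i) d"
  shows "mat_adjoint (rs_op m d V) = rs_op m d V"
  unfolding rs_op_msum using msum_adj_swap[OF assms assms] by simp



lemma m3: "(A::cm) \<in> carrier_mat n d \<Longrightarrow> B \<in> carrier_mat d d \<Longrightarrow> C \<in> carrier_mat d d \<Longrightarrow> A * B * C \<in> carrier_mat n d"
  by (metis mult_carrier_mat)

lemma m2: "(A::cm) \<in> carrier_mat n d \<Longrightarrow> B \<in> carrier_mat d d \<Longrightarrow> A * B \<in> carrier_mat n d"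
  by (metis mult_carrier_mat)

lemma frob_nonneg: "frob_norm A \<ge> 0"
  unfolding frob_norm_def by (intro real_sqrt_ge_zero sum_nonneg) auto

lemma frob_0: "frob_norm (0\<^sub>m r c :: cm) = 0"
  unfolding frob_norm_def by simp

lemma inv_facts: assumes V: "\<forall>i<m. (V i::cm) \<in> carrier_mat (k i) d"
  and inv: "invertible_mat (rs_op m d V)"
  shows "rs_inv m d V \<in> carrier_mat d d" "rs_op m d V * rs_inv m d V = 1\<^sub>m d"
    "rs_inv m d V * rs_op m d V = 1\<^sub>m d" "mat_adjoint (rs_inv m d V) = rs_inv m d V"
proof -
  define S where "S = rs_op m d V"
  have Sc: "S \<in> carrier_mat d d" unfolding S_def rs_op_msum by simp
  from inv obtain B where B: "S * B = 1\<^sub>m (dim_row S)" "B * S = 1\<^sub>m (dim_row B)"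
    unfolding S_def[symmetric] invertible_mat_def inverts_mat_def by blast
  have "dim_col B = d" using arg_cong[OF B(1), of dim_col] Sc by simp
  moreover have "dim_row B = d" using arg_cong[OF B(2), of dim_col] Sc by simp
  ultimately have Bc: "B \<in> carrier_mat d d" by auto
  have "S \<in> Units (ring_mat TYPE(complex) d ())"
    unfolding Units_def ring_mat_def using Bc Sc B by auto
  hence "mat_inverse S \<noteq> None" using mat_inverse(1)[OF Sc, where b = "()"] by metis
  then obtain Si where Si: "mat_inverse S = Some Si" by blast
  have e: "rs_inv m d V = Si" unfolding rs_inv_def S_def[symmetric] Si by simp
  from mat_inverse(2)[OF Sc Si] have r: "S * Si = 1\<^sub>m d" "Si * S = 1\<^sub>m d" "Si \<in> carrier_mat d d" by auto
  show "rs_inv m d V \<in> carrier_mat d d" "rs_op m d V * rs_inv m d V = 1\<^sub>m d"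
    "rs_inv m d V * rs_op m d V = 1\<^sub>m d" using r e S_def by auto
  have aS: "mat_adjoint S = S" unfolding S_def by (rule rs_op_adj[OF V])
  have "mat_adjoint Si * S = 1\<^sub>m d"
    using adj_mult[OF Sc r(3)] r(1) aS adj_one by metis
  have "mat_adjoint Si = mat_adjoint Si * (S * Si)" using r by simp
  also have "\<dots> = (mat_adjoint Si * S) * Si" using r Sc by (simp add: assoc_mult_mat[of _ d d _ d _ d])
  also have "\<dots> = Si" using \<open>mat_adjoint Si * S = 1\<^sub>m d\<close> r by simp
  finally show "mat_adjoint (rs_inv m d V) = rs_inv m d V" using e by simp
qed


theorem lemma6p2:
  fixes m d :: nat and k :: "nat \<Rightarrow> nat" and v :: "nat \<Rightarrow> real"
    and V W :: "nat \<Rightarrow> complex mat"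
  assumes "m \<ge> 1" and "d \<ge> 1"
    and "\<forall>i<m. 1 \<le> k i \<and> k i \<le> d"
    and "\<forall>i<m. v i > 0"
    and "local_dP_minimizer m k d v V W"
  shows "\<forall>i<m. W i = canonical_dual m d V i"
proof (rule ccontr)
  assume neg: "\<not> (\<forall>i<m. W i = canonical_dual m d V i)"
  from assms(5) have DRS: "is_DRS m k d v V W"
    and "\<exists>\<epsilon>>0. \<forall>V' W'. is_DRS m k d v V' W' \<and> dP m V V' + dP m W W' < \<epsilon> \<longrightarrow> FP m d V' W' \<ge> FP m d V W"
    unfolding local_dP_minimizer_def by auto
  then obtain \<epsilon> where eps: "\<epsilon> > 0" and minim:
    "\<forall>V' W'. is_DRS m k d v V' W' \<and> dP m V V' + dP m W W' < \<epsilon> \<longrightarrow> FP m d V' W' \<ge> FP m d V W"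
    by blast
  from DRS have Pv: "is_Pv m k d v V" and Vc: "\<forall>i<m. V i \<in> carrier_mat (k i) d"
    and Vinv: "invertible_mat (rs_op m d V)" and Wc: "\<forall>i<m. W i \<in> carrier_mat (k i) d"
    and dualW: "msum d d m (\<lambda>i. mat_adjoint (W i) * V i) = 1\<^sub>m d"
    unfolding is_DRS_def is_Pv_def is_RS_def is_dual_def is_system_def msum_def by auto
  define S where "S = rs_op m d V"
  define Si where "Si = rs_inv m d V"
  note inv = inv_facts[OF Vc Vinv, folded S_def Si_def]
  have Sc: "S \<in> carrier_mat d d" unfolding S_def rs_op_msum by simp
  have Sic: "Si \<in> carrier_mat d d" and SSi: "S * Si = 1\<^sub>m d" and SiS: "Si * S = 1\<^sub>m d"
    and aSi: "mat_adjoint Si = Si" using inv by auto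
  define Z where "Z = (\<lambda>i. W i - V i * Si)"
  have Zc: "\<forall>i<m. Z i \<in> carrier_mat (k i) d" unfolding Z_def using Wc Vc Sic
    by (metis minus_carrier_mat mult_carrier_mat)
  define SZ where "SZ = rs_op m d Z"
  have SZc: "SZ \<in> carrier_mat d d" unfolding SZ_def rs_op_msum by simp
  have cVV: "\<forall>i<m. mat_adjoint (V i) * V i \<in> carrier_mat d d" using Vc by (metis adj_carrier mult_carrier_mat)
  have cWV: "\<forall>i<m. mat_adjoint (W i) * V i \<in> carrier_mat d d" using Vc Wc by (metis adj_carrier mult_carrier_mat)
  have cZV: "\<forall>i<m. mat_adjoint (Z i) * V i \<in> carrier_mat d d" using Vc Zc by (metis adj_carrier mult_carrier_mat)
  have cVZ: "\<forall>i<m. mat_adjoint (V i) * Z i \<in> carrier_mat d d" using Vc Zc by (metis adj_carrier mult_carrier_mat)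
  have cZZ: "\<forall>i<m. mat_adjoint (Z i) * Z i \<in> carrier_mat d d" using Zc by (metis adj_carrier mult_carrier_mat)
  have cSiVV: "\<forall>i<m. Si * (mat_adjoint (V i) * V i) \<in> carrier_mat d d" using cVV Sic by simp

  have E1: "msum d d m (\<lambda>i. mat_adjoint (Z i) * V i) = 0\<^sub>m d d"
  proof -
    have "msum d d m (\<lambda>i. mat_adjoint (Z i) * V i) = msum d d m (\<lambda>i. mat_adjoint (W i) * V i - Si * (mat_adjoint (V i) * V i))"
    proof (rule msum_cong)
      fix i assume i: "i < m"
      have V: "V i \<in> carrier_mat (k i) d" and W: "W i \<in> carrier_mat (k i) d" using i Vc Wc by auto
      have VSi: "V i * Si \<in> carrier_mat (k i) d" using V Sic by simp
      have "mat_adjoint (Z i) = mat_adjoint (W i) - Si * mat_adjoint (V i)"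
        unfolding Z_def using adj_minus[OF W VSi] adj_mult[OF V Sic] aSi by simp
      hence "mat_adjoint (Z i) * V i = (mat_adjoint (W i) - Si * mat_adjoint (V i)) * V i" by simp
      also have "\<dots> = mat_adjoint (W i) * V i - (Si * mat_adjoint (V i)) * V i"
        using V W Sic by (intro minus_mult_distrib_mat[of _ d "k i"]) auto
      also have "(Si * mat_adjoint (V i)) * V i = Si * (mat_adjoint (V i) * V i)"
        using V Sic by (intro assoc_mult_mat[of _ d d _ "k i" _ d]) auto
      finally show "mat_adjoint (Z i) * V i = mat_adjoint (W i) * V i - Si * (mat_adjoint (V i) * V i)" .
    qed
    also have "\<dots> = msum d d m (\<lambda>i. mat_adjoint (W i) * V i) - msum d d m (\<lambda>i. Si * (mat_adjoint (V i) * V i))"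
      by (rule msum_minus[OF cWV cSiVV])
    also have "msum d d m (\<lambda>i. Si * (mat_adjoint (V i) * V i)) = Si * S"
      unfolding S_def rs_op_msum by (rule msum_mult_left[OF cVV Sic, symmetric])
    finally show ?thesis using dualW SiS by simp
  qed
  have E1': "msum d d m (\<lambda>i. mat_adjoint (V i) * Z i) = 0\<^sub>m d d"
    using msum_adj_swap[OF Vc Zc] E1 adj_zero by simp

  define Wt where "Wt = (\<lambda>t i. V i * Si + complex_of_real t \<cdot>\<^sub>m Z i)"
  have Wtc: "\<forall>i<m. Wt t i \<in> carrier_mat (k i) d" for t
    unfolding Wt_def using Zc by simp

  have E2: "rs_op m d (Wt t) = Si + complex_of_real (t * t) \<cdot>\<^sub>m SZ" for t
  proof -
    define c where "c = complex_of_real t"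
    define F1 where "F1 = (\<lambda>i. mat_adjoint Si * (mat_adjoint (V i) * V i) * Si)"
    define F2 where "F2 = (\<lambda>i. c \<cdot>\<^sub>m (mat_adjoint Si * (mat_adjoint (V i) * Z i)))"
    define F3 where "F3 = (\<lambda>i. c \<cdot>\<^sub>m (mat_adjoint (Z i) * V i * Si))"
    define F4 where "F4 = (\<lambda>i. (c * c) \<cdot>\<^sub>m (mat_adjoint (Z i) * Z i))"
    have c1: "\<forall>i<m. F1 i \<in> carrier_mat d d" unfolding F1_def using cVV Sic aSi by (simp add: m3 m2)
    have c2: "\<forall>i<m. F2 i \<in> carrier_mat d d" unfolding F2_def using cVZ Sic aSi by (simp add: m3 m2)
    have c3: "\<forall>i<m. F3 i \<in> carrier_mat d d" unfolding F3_def using cZV Sic aSi by (simp add: m3 m2)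
    have c4: "\<forall>i<m. F4 i \<in> carrier_mat d d" unfolding F4_def using cZZ by simp
    have c12: "\<forall>i<m. F1 i + F2 i \<in> carrier_mat d d" using c2 by simp
    have c34: "\<forall>i<m. F3 i + F4 i \<in> carrier_mat d d" using c4 by simp
    have "rs_op m d (Wt t) = msum d d m (\<lambda>i. (F1 i + F2 i) + (F3 i + F4 i))"
      unfolding rs_op_msum
    proof (rule msum_cong)
      fix i assume i: "i < m"
      show "mat_adjoint (Wt t i) * Wt t i = (F1 i + F2 i) + (F3 i + F4 i)"
        unfolding Wt_def F1_def F2_def F3_def F4_def c_def
        using expand_sq[of "V i" "k i" d Si "Z i" t] i Vc Zc Sic by auto
    qed
    also have "\<dots> = (msum d d m F1 + msum d d m F2) + (msum d d m F3 + msum d d m F4)"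
      by (simp only: msum_add[OF c12 c34] msum_add[OF c1 c2] msum_add[OF c3 c4])
    also have "msum d d m F1 = Si"
    proof -
      have cA: "\<forall>i<m. mat_adjoint Si * (mat_adjoint (V i) * V i) \<in> carrier_mat d d" using cVV Sic aSi by (simp add: m3 m2)
      have "msum d d m F1 = msum d d m (\<lambda>i. mat_adjoint Si * (mat_adjoint (V i) * V i)) * Si"
        unfolding F1_def by (rule msum_mult_right[OF cA Sic, symmetric])
      also have "msum d d m (\<lambda>i. mat_adjoint Si * (mat_adjoint (V i) * V i)) = mat_adjoint Si * S"
        unfolding S_def rs_op_msum using Sic by (intro msum_mult_left[OF cVV, symmetric]) auto
      finally show ?thesis using aSi SiS Sic aSi by simp
    qed
    also have "msum d d m F2 = 0\<^sub>m d d"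
    proof -
      have cA: "\<forall>i<m. mat_adjoint Si * (mat_adjoint (V i) * Z i) \<in> carrier_mat d d" using cVZ Sic aSi by (simp add: m3 m2)
      have "msum d d m F2 = c \<cdot>\<^sub>m msum d d m (\<lambda>i. mat_adjoint Si * (mat_adjoint (V i) * Z i))"
        unfolding F2_def by (rule msum_smult[OF cA])
      also have "msum d d m (\<lambda>i. mat_adjoint Si * (mat_adjoint (V i) * Z i)) = mat_adjoint Si * 0\<^sub>m d d"
        using Sic by (subst E1'[symmetric], intro msum_mult_left[OF cVZ, symmetric]) auto
      finally show ?thesis using Sic aSi by simp
    qed
    also have "msum d d m F3 = 0\<^sub>m d d"
    proof -
      have cA: "\<forall>i<m. mat_adjoint (Z i) * V i * Si \<in> carrier_mat d d" using cZV Sic aSi by (simp add: m3 m2)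
      have "msum d d m F3 = c \<cdot>\<^sub>m msum d d m (\<lambda>i. mat_adjoint (Z i) * V i * Si)"
        unfolding F3_def by (rule msum_smult[OF cA])
      also have "msum d d m (\<lambda>i. mat_adjoint (Z i) * V i * Si) = 0\<^sub>m d d * Si"
        by (subst E1[symmetric], intro msum_mult_right[OF cZV Sic, symmetric])
      finally show ?thesis using Sic aSi by simp
    qed
    also have "msum d d m F4 = (c * c) \<cdot>\<^sub>m SZ"
      unfolding F4_def SZ_def rs_op_msum by (rule msum_smult[OF cZZ])
    finally show ?thesis unfolding c_def using Sic SZc by simp
  qed

  have E3: "msum d d m (\<lambda>i. mat_adjoint (Wt t i) * V i) = 1\<^sub>m d" for t
  proof -
    define c where "c = complex_of_real t"
    have cA: "\<forall>i<m. mat_adjoint Si * (mat_adjoint (V i) * V i) \<in> carrier_mat d d" using cVV Sic aSi by (simp add: m3 m2)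
    have cB: "\<forall>i<m. c \<cdot>\<^sub>m (mat_adjoint (Z i) * V i) \<in> carrier_mat d d" using cZV by simp
    have "msum d d m (\<lambda>i. mat_adjoint (Wt t i) * V i)
        = msum d d m (\<lambda>i. mat_adjoint Si * (mat_adjoint (V i) * V i) + c \<cdot>\<^sub>m (mat_adjoint (Z i) * V i))"
    proof (rule msum_cong)
      fix i assume i: "i < m"
      show "mat_adjoint (Wt t i) * V i = mat_adjoint Si * (mat_adjoint (V i) * V i) + c \<cdot>\<^sub>m (mat_adjoint (Z i) * V i)"
        unfolding Wt_def c_def using expand_lin[of "V i" "k i" d Si "Z i" t] i Vc Zc Sic by auto
    qed
    also have "\<dots> = msum d d m (\<lambda>i. mat_adjoint Si * (mat_adjoint (V i) * V i)) + msum d d m (\<lambda>i. c \<cdot>\<^sub>m (mat_adjoint (Z i) * V i))"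
      by (rule msum_add[OF cA cB])
    also have "msum d d m (\<lambda>i. mat_adjoint Si * (mat_adjoint (V i) * V i)) = mat_adjoint Si * S"
      unfolding S_def rs_op_msum using Sic by (intro msum_mult_left[OF cVV, symmetric]) auto
    also have "msum d d m (\<lambda>i. c \<cdot>\<^sub>m (mat_adjoint (Z i) * V i)) = c \<cdot>\<^sub>m 0\<^sub>m d d"
      using msum_smult[OF cZV, of c] E1 by simp
    finally show ?thesis using aSi SiS by simp
  qed

  have DRSt: "is_DRS m k d v V (Wt t)" for t
  proof -
    have "mat d d (\<lambda>(a, b). \<Sum>i<m. (mat_adjoint (Wt t i) * V i) $$ (a, b)) = 1\<^sub>m d"
      using E3[of t] unfolding msum_def .
    thus ?thesis unfolding is_DRS_def is_dual_def is_RS_def is_system_def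
      using Pv Wtc dual_invertible[OF Vc Wtc E3] by auto
  qed

  have Wt1: "Wt 1 i = W i" if i: "i < m" for i
  proof -
    have V: "V i \<in> carrier_mat (k i) d" and W: "W i \<in> carrier_mat (k i) d" using i Vc Wc by auto
    show ?thesis unfolding Wt_def Z_def
      using V W Sic by (intro eq_matI) auto
  qed
  have FPW: "FP m d V W = FP m d V (Wt 1)"
  proof -
    have "rs_op m d (Wt 1) = rs_op m d W" unfolding rs_op_msum by (intro msum_cong) (simp add: Wt1)
    thus ?thesis unfolding FP_def by simp
  qed

  define a where "a = Re (mtrace (Si * SZ))"
  define b where "b = Re (mtrace (SZ * SZ))"
  define K where "K = Re (mtrace (S * S)) + Re (mtrace (Si * Si))"
  have FPt: "FP m d V (Wt t) = K + 2 * (t * t) * a + (t * t)\<^sup>2 * b" for t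
    unfolding FP_def E2 S_def[symmetric] tr_expand[OF Sic SZc] K_def a_def b_def by simp


  have a_nonneg: "a \<ge> 0"
  proof -
    have cSZZ: "\<forall>i<m. Si * (mat_adjoint (Z i) * Z i) \<in> carrier_mat d d" using cZZ Sic by simp
    have "mtrace (Si * SZ) = mtrace (msum d d m (\<lambda>i. Si * (mat_adjoint (Z i) * Z i)))"
      unfolding SZ_def rs_op_msum by (subst msum_mult_left[OF cZZ Sic]) simp
    also have "\<dots> = (\<Sum>i<m. mtrace (Si * (mat_adjoint (Z i) * Z i)))" by (rule mtrace_msum[OF cSZZ])
    finally have e: "a = (\<Sum>i<m. Re (mtrace (Si * (mat_adjoint (Z i) * Z i))))" unfolding a_def by simp
    have "Re (mtrace (Si * (mat_adjoint (Z i) * Z i))) \<ge> 0" if i: "i < m" for i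
    proof -
      have Zi: "Z i \<in> carrier_mat (k i) d" using Zc i by simp
      define P where "P = Si * mat_adjoint (Z i)"
      have Pc: "P \<in> carrier_mat d (k i)" unfolding P_def using Sic Zi by simp
      have aP: "mat_adjoint P = Z i * Si"
        unfolding P_def using adj_mult[OF Sic adj_carrier[OF Zi]] aSi by (simp add: adj_adj)
      have "mtrace (Si * (mat_adjoint (Z i) * Z i)) = mtrace ((Si * mat_adjoint (Z i)) * Z i)"
        using Sic Zi by (subst assoc_mult_mat[of _ d d _ "k i" _ d]) auto
      also have "\<dots> = mtrace (Z i * (Si * mat_adjoint (Z i)))"
        using Sic Zi by (intro mtrace_comm[of _ d "k i"]) auto
      also have "Z i * (Si * mat_adjoint (Z i)) = mat_adjoint P * S * P"
      proof -
        have "mat_adjoint P * S = Z i" unfolding aP using Zi Sic Sc SiS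
          by (simp add: assoc_mult_mat[of _ "k i" d _ d _ d])
        thus ?thesis unfolding P_def by simp
      qed
      also have "mtrace (mat_adjoint P * S * P) = complex_of_real (\<Sum>j<m. (frob_norm (V j * P))\<^sup>2)"
        unfolding S_def by (rule trace_sandwich[OF Vc Pc])
      finally show ?thesis by (simp add: sum_nonneg)
    qed
    thus ?thesis unfolding e by (intro sum_nonneg) auto
  qed

  from neg obtain i0 where i0: "i0 < m" "W i0 \<noteq> V i0 * Si"
    unfolding canonical_dual_def Si_def by auto
  have Zi0: "Z i0 \<in> carrier_mat (k i0) d" using Zc i0 by simp
  have Vi0: "V i0 \<in> carrier_mat (k i0) d" and Wi0: "W i0 \<in> carrier_mat (k i0) d" using Vc Wc i0 by auto
  have "Z i0 \<noteq> 0\<^sub>m (k i0) d"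
  proof
    assume z: "Z i0 = 0\<^sub>m (k i0) d"
    have "W i0 = V i0 * Si"
    proof (rule eq_matI)
      fix a b assume ab: "a < dim_row (V i0 * Si)" "b < dim_col (V i0 * Si)"
      have ab': "a < k i0" "b < d" using ab Vi0 Sic by auto
      have "Z i0 $$ (a,b) = 0" using z ab' by simp
      thus "W i0 $$ (a,b) = (V i0 * Si) $$ (a,b)" unfolding Z_def using ab' Vi0 Wi0 Sic by simp
    qed (use Vi0 Wi0 Sic in simp_all)
    with i0 show False by simp
  qed
  hence fz: "frob_norm (Z i0) > 0" using frob_zero[OF Zi0] frob_nonneg[of "Z i0"] by force
  have trSZ: "mtrace SZ = complex_of_real (\<Sum>j<m. (frob_norm (Z j))\<^sup>2)"
  proof -
    have "mtrace (mat_adjoint (1\<^sub>m d) * SZ * 1\<^sub>m d) = complex_of_real (\<Sum>j<m. (frob_norm (Z j * 1\<^sub>m d))\<^sup>2)"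
      unfolding SZ_def by (rule trace_sandwich[OF Zc one_carrier_mat])
    moreover have "(\<Sum>j<m. (frob_norm (Z j * 1\<^sub>m d))\<^sup>2) = (\<Sum>j<m. (frob_norm (Z j))\<^sup>2)"
      using Zc by (intro sum.cong) auto
    ultimately show ?thesis using SZc by (simp add: adj_one)
  qed
  have "(frob_norm (Z i0))\<^sup>2 \<le> (\<Sum>j<m. (frob_norm (Z j))\<^sup>2)"
    by (rule member_le_sum) (use i0 in auto)
  moreover have "(frob_norm (Z i0))\<^sup>2 > 0" using fz by simp
  ultimately have "Re (mtrace SZ) > 0" unfolding trSZ Re_complex_of_real by linarith
  hence "SZ \<noteq> 0\<^sub>m d d" unfolding mtrace_def by auto
  hence "frob_norm SZ \<noteq> 0" using frob_zero[OF SZc] by auto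
  hence fSZ: "frob_norm SZ > 0" using frob_nonneg[of SZ] by simp
  have b_pos: "b > 0"
  proof -
    have "mtrace (SZ * SZ) = mtrace (mat_adjoint SZ * SZ)" unfolding SZ_def using rs_op_adj[OF Zc] by simp
    also have "\<dots> = complex_of_real ((frob_norm SZ)\<^sup>2)" by (rule mtrace_frob)
    finally show ?thesis unfolding b_def using fSZ by simp
  qed

  define N where "N = sqrt (\<Sum>i<m. (frob_norm (Z i))\<^sup>2)"
  have N0: "N \<ge> 0" unfolding N_def by (simp add: sum_nonneg)
  have dPVV: "dP m V V = 0"
  proof -
    have "(\<Sum>i<m. (frob_norm (V i - V i))\<^sup>2) = 0"
      using Vc by (intro sum.neutral) (auto simp: frob_0)
    thus ?thesis unfolding dP_def by simp
  qed
  have dPW: "dP m W (Wt t) = \<bar>1 - t\<bar> * N" for t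
  proof -
    have "(\<Sum>i<m. (frob_norm (W i - Wt t i))\<^sup>2) = (\<Sum>i<m. (1 - t)\<^sup>2 * (frob_norm (Z i))\<^sup>2)"
    proof (rule sum.cong[OF refl])
      fix i assume "i \<in> {..<m}"
      hence i: "i < m" by simp
      have "W i - Wt t i = complex_of_real (1 - t) \<cdot>\<^sub>m Z i"
        unfolding Wt_def Z_def using Vc Wc i Sic by (intro eq_matI) (auto simp: algebra_simps)
      thus "(frob_norm (W i - Wt t i))\<^sup>2 = (1 - t)\<^sup>2 * (frob_norm (Z i))\<^sup>2"
        by (simp only: frob_smult power_mult_distrib power2_abs)
    qed
    also have "\<dots> = (1 - t)\<^sup>2 * (\<Sum>i<m. (frob_norm (Z i))\<^sup>2)" by (simp add: sum_distrib_left)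
    finally show ?thesis unfolding dP_def N_def by (simp add: real_sqrt_mult)
  qed

  define \<delta> where "\<delta> = min (1/2) (\<epsilon> / (2 * (N + 1)))"
  have d0: "\<delta> > 0" unfolding \<delta>_def using eps N0 by simp
  have d1: "\<delta> \<le> 1/2" unfolding \<delta>_def by (rule min.cobounded1)
  have d2: "\<delta> \<le> \<epsilon> / (2 * (N + 1))" unfolding \<delta>_def by (rule min.cobounded2)
  define t where "t = 1 - \<delta>"
  have "\<delta> * N \<le> \<epsilon> / (2 * (N + 1)) * N" using d2 N0 by (rule mult_right_mono)
  also have "\<dots> < \<epsilon>"
  proof -
    have p: "0 \<le> N * \<epsilon>" using eps N0 by simp
    have q: "\<epsilon> * (2 * (N + 1)) = 2 * (N * \<epsilon>) + 2 * \<epsilon>" by (simp add: algebra_simps)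
    have "N * \<epsilon> < \<epsilon> * (2 * (N + 1))" unfolding q using p eps by linarith
    moreover have "\<epsilon> / (2 * (N + 1)) * N = (N * \<epsilon>) / (2 * (N + 1))" by simp
    moreover have "0 < 2 * (N + 1)" using N0 by simp
    ultimately show ?thesis by (simp add: pos_divide_less_eq mult.commute)
  qed
  finally have dN: "\<delta> * N < \<epsilon>" .
  have "dP m V V + dP m W (Wt t) < \<epsilon>" unfolding dPVV dPW t_def using d0 dN by simp
  hence ge: "FP m d V (Wt t) \<ge> FP m d V W" using minim DRSt by blast
  have t0: "t \<ge> 0" and t1: "t < 1" unfolding t_def using d0 d1 by auto
  have r0: "t * t \<ge> 0" using t0 by simp
  have "t * t \<le> 1 * t" using t0 t1 by (intro mult_right_mono) auto
  hence r1: "t * t < 1" using t1 by simp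
  have "(t * t)\<^sup>2 = (t * t) * (t * t)" by (simp add: power2_eq_square)
  also have "\<dots> \<le> 1 * (t * t)" using r0 r1 by (intro mult_right_mono) auto
  finally have "(t * t)\<^sup>2 < 1" using r1 by simp
  hence "(t * t)\<^sup>2 * b < b" using b_pos by simp
  moreover have "(t * t) * a \<le> 1 * a" using a_nonneg r1 by (intro mult_right_mono) auto
  hence "2 * (t * t) * a \<le> 2 * a" by simp
  ultimately have "FP m d V (Wt t) < FP m d V W" unfolding FPW FPt by simp
  with ge show False by simp
qed


end
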